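(* Let $\lambda\vdash n$ with ${\rm aft}(\lambda)=k$. Then $f^\lambda\leq n^k/\sqrt{k!}$ and $f^\lambda\geq \binom{n-k}{k}$.
   Context: For $\lambda\vdash n$, ${\rm aft}(\lambda):=n-\max\{\lambda_1,\ell(\lambda)\}$, where $\ell(\lambda)$ is the number of nonzero parts. $f^\lambda$ denotes the number of standard Young tableaux of shape $\lambda$. *)

theory Defs
  imports Complex_Main
begin

text \<open>A partition of n: a weakly decreasing list of positive parts summing to n.
  Parts are indexed from 0: lambda_1 is lam!0.\<close>
definition is_partition :: "nat list \<Rightarrow> nat \<Rightarrow> bool" where
  "is_partition lam n \<longleftrightarrow> sorted (rev lam) \<and> (\<forall>x\<in>set lam. 0 < x) \<and> sum_list lam = n"

definition first_part :: "nat list \<Rightarrow> nat" where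
  "first_part lam = (if lam = [] then 0 else hd lam)"

definition aft :: "nat list \<Rightarrow> nat" where
  "aft lam = sum_list lam - max (first_part lam) (length lam)"

definition young_diagram :: "nat list \<Rightarrow> (nat \<times> nat) set" where
  "young_diagram lam = {(i, j). i < length lam \<and> j < lam ! i}"

definition is_SYT :: "nat list \<Rightarrow> (nat \<times> nat \<Rightarrow> nat) \<Rightarrow> bool" where
  "is_SYT lam T \<longleftrightarrow>
     bij_betw T (young_diagram lam) {1..sum_list lam} \<and>
     (\<forall>i j. (i, j) \<in> young_diagram lam \<and> (i, Suc j) \<in> young_diagram lam \<longrightarrow> T (i, j) < T (i, Suc j)) \<and>
     (\<forall>i j. (i, j) \<in> young_diagram lam \<and> (Suc i, j) \<in> young_diagram lam \<longrightarrow> T (i, j) < T (Suc i, j)) \<and>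
     (\<forall>c. c \<notin> young_diagram lam \<longrightarrow> T c = 0)"

text \<open>f^lambda: the number of standard Young tableaux of shape lambda
  (tableaux are normalized to 0 outside the diagram so they are counted once).\<close>
definition num_SYT :: "nat list \<Rightarrow> nat" where
  "num_SYT lam = card {T. is_SYT lam T}"

end

theory Submission
  imports Defs
begin



definition ldown :: "(nat \<times> nat) set \<Rightarrow> bool" where
  "ldown D \<longleftrightarrow> finite D \<and> (\<forall>i j. (Suc i, j) \<in> D \<longrightarrow> (i, j) \<in> D) \<and> (\<forall>i j. (i, Suc j) \<in> D \<longrightarrow> (i, j) \<in> D)"

definition syt :: "(nat \<times> nat) set \<Rightarrow> (nat \<times> nat \<Rightarrow> nat) \<Rightarrow> bool" where
  "syt D T \<longleftrightarrow> bij_betw T D {1..card D} \<and>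
     (\<forall>i j. (i, j) \<in> D \<and> (i, Suc j) \<in> D \<longrightarrow> T (i, j) < T (i, Suc j)) \<and>
     (\<forall>i j. (i, j) \<in> D \<and> (Suc i, j) \<in> D \<longrightarrow> T (i, j) < T (Suc i, j)) \<and>
     (\<forall>c. c \<notin> D \<longrightarrow> T c = 0)"

definition FF :: "(nat \<times> nat) set \<Rightarrow> nat" where
  "FF D = card {T. syt D T}"

definition corner :: "(nat \<times> nat) set \<Rightarrow> nat \<times> nat \<Rightarrow> bool" where
  "corner D c \<longleftrightarrow> c \<in> D \<and> (fst c, Suc (snd c)) \<notin> D \<and> (Suc (fst c), snd c) \<notin> D"

definition addable :: "(nat \<times> nat) set \<Rightarrow> nat \<times> nat \<Rightarrow> bool" where
  "addable D c \<longleftrightarrow> c \<notin> D \<and> (\<forall>i j. c = (Suc i, j) \<longrightarrow> (i, j) \<in> D) \<and> (\<forall>i j. c = (i, Suc j) \<longrightarrow> (i, j) \<in> D)"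

definition rem :: "(nat \<times> nat) set \<Rightarrow> (nat \<times> nat) set" where
  "rem D = {c. corner D c}"

definition add :: "(nat \<times> nat) set \<Rightarrow> (nat \<times> nat) set" where
  "add D = {c. addable D c}"

definition LL :: "(nat \<times> nat) set \<Rightarrow> nat \<Rightarrow> nat" where
  "LL D i = card {j. (i, j) \<in> D}"

lemma ldown_fin: "ldown D \<Longrightarrow> finite D"
  unfolding ldown_def by (elim conjE)

lemma ldown_up: "ldown D \<Longrightarrow> (Suc i, j) \<in> D \<Longrightarrow> (i, j) \<in> D"
  unfolding ldown_def by (elim conjE) (erule allE, erule allE, erule mp)

lemma ldown_left: "ldown D \<Longrightarrow> (i, Suc j) \<in> D \<Longrightarrow> (i, j) \<in> D"
  unfolding ldown_def by (elim conjE) (erule allE, erule allE, erule mp)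

lemma ldownI: "finite D \<Longrightarrow> (\<And>i j. (Suc i, j) \<in> D \<Longrightarrow> (i, j) \<in> D) \<Longrightarrow> (\<And>i j. (i, Suc j) \<in> D \<Longrightarrow> (i, j) \<in> D) \<Longrightarrow> ldown D"
  unfolding ldown_def by blast

lemma ldown_closed:
  assumes "ldown D" "(i, j) \<in> D" "i' \<le> i" "j' \<le> j"
  shows "(i', j') \<in> D"
proof -
  have row: "(i, j'') \<in> D" if "(i, j) \<in> D" "j'' \<le> j" for i j j''
    using that
  proof (induction j arbitrary: j'')
    case 0 then show ?case by simp
  next
    case (Suc j)
    then show ?case using ldown_left[OF assms(1)] by (metis le_Suc_eq)
  qed
  have col: "(i'', j) \<in> D" if "(i, j) \<in> D" "i'' \<le> i" for i j i''
    using that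
  proof (induction i arbitrary: i'')
    case 0 then show ?case by simp
  next
    case (Suc i)
    then show ?case using ldown_up[OF assms(1)] by (metis le_Suc_eq)
  qed
  show ?thesis using row[OF col[OF assms(2) assms(3)] assms(4)] .
qed

lemma downclosed_nat_set:
  fixes S :: "nat set"
  assumes "finite S" "\<And>x y. x \<in> S \<Longrightarrow> y \<le> x \<Longrightarrow> y \<in> S"
  shows "S = {..<card S}"
proof (cases "S = {}")
  case True then show ?thesis by simp
next
  case False
  define M where "M = Max S"
  have "M \<in> S" using False assms(1) M_def by simp
  have "S = {..M}"
  proof
    show "S \<subseteq> {..M}" using assms(1) M_def by auto
    show "{..M} \<subseteq> S" using assms(2) \<open>M \<in> S\<close> by auto
  qed
  then show ?thesis by (simp add: lessThan_Suc_atMost)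
qed

lemma row_eq:
  assumes "ldown D"
  shows "{j. (i, j) \<in> D} = {..<LL D i}"
proof -
  have fin: "finite {j. (i, j) \<in> D}"
  proof -
    have "{j. (i, j) \<in> D} \<subseteq> snd ` D"
    proof
      fix j assume "j \<in> {j. (i, j) \<in> D}"
      then show "j \<in> snd ` D" by (intro image_eqI[of _ snd "(i, j)"]) auto
    qed
    moreover have "finite D" using ldown_fin[OF assms] .
    ultimately show ?thesis by (meson finite_surj)
  qed
  show ?thesis unfolding LL_def
  proof (rule downclosed_nat_set[OF fin])
    fix x y assume "x \<in> {j. (i, j) \<in> D}" "y \<le> x"
    then show "y \<in> {j. (i, j) \<in> D}" using ldown_closed[OF assms, of i x i y] by simp
  qed
qed

lemma mem_iff_LL:
  assumes "ldown D"
  shows "(i, j) \<in> D \<longleftrightarrow> j < LL D i"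
proof -
  have "j \<in> {j. (i, j) \<in> D} \<longleftrightarrow> j \<in> {..<LL D i}" by (simp only: row_eq[OF assms])
  then show ?thesis by simp
qed

lemma LL_Suc_le:
  assumes "ldown D"
  shows "LL D (Suc i) \<le> LL D i"
proof -
  have "{j. (Suc i, j) \<in> D} \<subseteq> {j. (i, j) \<in> D}" using ldown_up[OF assms] by blast
  moreover have "finite {j. (i, j) \<in> D}" by (subst row_eq[OF assms]) simp
  ultimately show ?thesis unfolding LL_def by (rule card_mono[rotated])
qed

lemma rem_char:
  assumes "ldown D"
  shows "rem D = (\<lambda>i. (i, LL D i - 1)) ` {i. LL D (Suc i) < LL D i}"
proof -
  have key: "corner D (i, j) \<longleftrightarrow> j = LL D i - 1 \<and> LL D (Suc i) < LL D i" for i j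
  proof -
    have "corner D (i, j) \<longleftrightarrow> j < LL D i \<and> \<not> Suc j < LL D i \<and> \<not> j < LL D (Suc i)"
      unfolding corner_def fst_conv snd_conv mem_iff_LL[OF assms] ..
    also have "\<dots> \<longleftrightarrow> j = LL D i - 1 \<and> LL D (Suc i) < LL D i" by arith
    finally show ?thesis .
  qed
  show ?thesis
  proof (rule set_eqI)
    fix x :: "nat \<times> nat"
    obtain i j where x: "x = (i, j)" by fastforce
    show "x \<in> rem D \<longleftrightarrow> x \<in> (\<lambda>i. (i, LL D i - 1)) ` {i. LL D (Suc i) < LL D i}"
      unfolding x rem_def mem_Collect_eq key by auto
  qed
qed

lemma add_char:
  assumes "ldown D"
  shows "add D = (\<lambda>i. (i, LL D i)) ` ({0} \<union> Suc ` {i. LL D (Suc i) < LL D i})"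
proof -
  have "addable D (i, j) \<longleftrightarrow> j = LL D i \<and> (i = 0 \<or> (\<exists>i'. i = Suc i' \<and> LL D (Suc i') < LL D i'))" for i j
  proof -
    have "addable D (i, j) \<longleftrightarrow> \<not> j < LL D i \<and> (\<forall>i'. i = Suc i' \<longrightarrow> j < LL D i') \<and> (\<forall>j'. j = Suc j' \<longrightarrow> j' < LL D i)"
      unfolding addable_def using mem_iff_LL[OF assms] by auto
    also have "\<dots> \<longleftrightarrow> j = LL D i \<and> (i = 0 \<or> (\<exists>i'. i = Suc i' \<and> LL D (Suc i') < LL D i'))"
      by (cases i; cases j) auto
    finally show ?thesis .
  qed
  then show ?thesis unfolding add_def by auto
qed

lemma finite_R:
  assumes "ldown D"
  shows "finite {i. LL D (Suc i) < LL D i}"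
proof -
  have "{i. LL D (Suc i) < LL D i} \<subseteq> fst ` D"
  proof
    fix i assume "i \<in> {i. LL D (Suc i) < LL D i}"
    then have "(i, 0) \<in> D" using mem_iff_LL[OF assms] by auto
    then show "i \<in> fst ` D" by force
  qed
  then show ?thesis using ldown_fin[OF assms] by (meson finite_surj)
qed

lemma card_add_rem:
  assumes "ldown D"
  shows "finite (add D) \<and> finite (rem D) \<and> card (add D) = card (rem D) + 1"
proof -
  let ?R = "{i. LL D (Suc i) < LL D i}"
  have f: "finite ?R" using finite_R[OF assms] .
  have i1: "inj_on (\<lambda>i. (i, LL D i - 1)) ?R" by (auto simp: inj_on_def)
  have i2: "inj_on (\<lambda>i. (i, LL D i)) X" for X by (auto simp: inj_on_def)
  have "card (rem D) = card ?R" unfolding rem_char[OF assms] using card_image[OF i1] .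
  moreover have "card (add D) = card ({0} \<union> Suc ` ?R)" unfolding add_char[OF assms] using card_image[OF i2] .
  moreover have "card ({0} \<union> Suc ` ?R) = card ?R + 1"
    using f by (simp add: card_image)
  ultimately show ?thesis using f unfolding rem_char[OF assms] add_char[OF assms] by simp
qed




lemma ldown_remove:
  assumes "ldown D" "corner D c"
  shows "ldown (D - {c})"
proof (rule ldownI)
  show "finite (D - {c})" using ldown_fin[OF assms(1)] by simp
  fix i j
  show "(Suc i, j) \<in> D - {c} \<Longrightarrow> (i, j) \<in> D - {c}" using assms(2) ldown_up[OF assms(1)]
    unfolding corner_def by auto
  show "(i, Suc j) \<in> D - {c} \<Longrightarrow> (i, j) \<in> D - {c}" using assms(2) ldown_left[OF assms(1)]
    unfolding corner_def by auto
qed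

lemma ldown_insert:
  assumes "ldown D" "addable D c"
  shows "ldown (insert c D)"
proof (rule ldownI)
  show "finite (insert c D)" using ldown_fin[OF assms(1)] by simp
  fix i j
  show "(Suc i, j) \<in> insert c D \<Longrightarrow> (i, j) \<in> insert c D" using assms(2) ldown_up[OF assms(1)]
    unfolding addable_def by auto
  show "(i, Suc j) \<in> insert c D \<Longrightarrow> (i, j) \<in> insert c D" using assms(2) ldown_left[OF assms(1)]
    unfolding addable_def by auto
qed

lemma syt_bij: "syt D T \<Longrightarrow> bij_betw T D {1..card D}"
  unfolding syt_def by (elim conjE)
lemma syt_row: "syt D T \<Longrightarrow> (i, j) \<in> D \<Longrightarrow> (i, Suc j) \<in> D \<Longrightarrow> T (i, j) < T (i, Suc j)"
  unfolding syt_def by (elim conjE) (erule allE, erule allE, erule mp, rule conjI)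
lemma syt_col: "syt D T \<Longrightarrow> (i, j) \<in> D \<Longrightarrow> (Suc i, j) \<in> D \<Longrightarrow> T (i, j) < T (Suc i, j)"
  unfolding syt_def by (elim conjE) (erule allE, erule allE, erule mp, rule conjI)
lemma syt_out: "syt D T \<Longrightarrow> c \<notin> D \<Longrightarrow> T c = 0"
  unfolding syt_def by (elim conjE) (erule allE, erule mp)
lemma sytI: "bij_betw T D {1..card D} \<Longrightarrow> (\<And>i j. (i, j) \<in> D \<Longrightarrow> (i, Suc j) \<in> D \<Longrightarrow> T (i, j) < T (i, Suc j))
  \<Longrightarrow> (\<And>i j. (i, j) \<in> D \<Longrightarrow> (Suc i, j) \<in> D \<Longrightarrow> T (i, j) < T (Suc i, j))
  \<Longrightarrow> (\<And>c. c \<notin> D \<Longrightarrow> T c = 0) \<Longrightarrow> syt D T"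
  unfolding syt_def by blast

lemma finite_syt:
  assumes "finite D"
  shows "finite {T. syt D T}"
proof -
  have "{T. syt D T} \<subseteq> {f. \<forall>x. (x \<in> D \<longrightarrow> f x \<in> {1..card D}) \<and> (x \<notin> D \<longrightarrow> f x = 0)}"
    unfolding syt_def bij_betw_def by auto
  then show ?thesis using finite_subset finite_set_of_finite_funs[OF assms, of "{1..card D}" 0] by blast
qed

lemma FF_empty: "FF {} = 1"
proof -
  have "{T. syt {} T} = {\<lambda>_. 0}" unfolding syt_def by (auto simp: bij_betw_def)
  then show ?thesis unfolding FF_def by simp
qed

lemma syt_max_corner:
  assumes "syt D T" "c \<in> D" "T c = card D"
  shows "corner D c"
proof -
  have le: "T d \<le> card D" if "d \<in> D" for d using assms(1) that unfolding syt_def bij_betw_def by auto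
  obtain i j where c: "c = (i, j)" by fastforce
  have r: "\<forall>i j. (i, j) \<in> D \<and> (i, Suc j) \<in> D \<longrightarrow> T (i, j) < T (i, Suc j)"
   and d: "\<forall>i j. (i, j) \<in> D \<and> (Suc i, j) \<in> D \<longrightarrow> T (i, j) < T (Suc i, j)"
    using assms(1) unfolding syt_def by blast+
  have "(i, Suc j) \<notin> D"
  proof
    assume h: "(i, Suc j) \<in> D"
    then have "T (i, j) < T (i, Suc j)" using r assms(2) c by blast
    then show False using le[OF h] assms(3) c by simp
  qed
  moreover have "(Suc i, j) \<notin> D"
  proof
    assume h: "(Suc i, j) \<in> D"
    then have "T (i, j) < T (Suc i, j)" using d assms(2) c by blast
    then show False using le[OF h] assms(3) c by simp
  qed
  ultimately show ?thesis using assms(2) c unfolding corner_def by simp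
qed

lemma syt_remove:
  assumes "syt D T" "corner D c" "T c = card D"
  shows "syt (D - {c}) (T(c := 0))"
proof -
  have cD: "c \<in> D" using assms(2) unfolding corner_def by simp
  have fin: "finite D" using assms(1) unfolding syt_def by (metis bij_betw_finite finite_atLeastAtMost)
  have bij: "bij_betw T D {1..card D}" using assms(1) unfolding syt_def by simp
  have "bij_betw T (D - {c}) ({1..card D} - {T c})"
  proof -
    have "inj_on T (D - {c})" using bij unfolding bij_betw_def by (meson inj_on_diff)
    moreover have "T ` (D - {c}) = T ` D - {T c}" using bij cD inj_on_image_set_diff[of T D D "{c}"] unfolding bij_betw_def by auto
    ultimately show ?thesis using bij unfolding bij_betw_def by simp
  qed
  moreover have "{1..card D} - {T c} = {1..card (D - {c})}" using assms(3) cD fin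
    by (auto simp: card_Diff_singleton)
  moreover have "bij_betw (T(c := 0)) (D - {c}) X \<longleftrightarrow> bij_betw T (D - {c}) X" for X
    by (rule bij_betw_cong) simp
  ultimately have "bij_betw (T(c := 0)) (D - {c}) {1..card (D - {c})}" by simp
  then show ?thesis using assms(1) unfolding syt_def by auto
qed

lemma syt_extend:
  assumes "syt (D - {c}) T" "corner D c" "finite D"
  shows "syt D (T(c := card D))"
proof -
  have cD: "c \<in> D" using assms(2) unfolding corner_def by simp
  have cardD1: "card (D - {c}) = card D - 1" using cD assms(3) by simp
  have "card D \<noteq> 0" using cD assms(3) by auto
  then have cardD2: "card D \<ge> 1" by simp
  note cardD = cardD1 cardD2
  have bij: "bij_betw T (D - {c}) {1..card D - 1}" using syt_bij[OF assms(1)] cardD1 by simp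
  have Tc: "T c = 0" using syt_out[OF assms(1)] by simp
  have b2: "bij_betw (T(c := card D)) (D - {c}) {1..card D - 1}"
  proof -
    have "bij_betw (T(c := card D)) (D - {c}) X \<longleftrightarrow> bij_betw T (D - {c}) X" for X
      by (rule bij_betw_cong) simp
    then show ?thesis using bij by simp
  qed
  have "bij_betw (T(c := card D)) D {1..card D}"
  proof -
    have n1: "c \<notin> D - {c}" by simp
    have n2: "(T(c := card D)) c \<notin> {1..card D - 1}" using cardD by simp
    have "bij_betw (T(c := card D)) (D - {c} \<union> {c}) ({1..card D - 1} \<union> {(T(c := card D)) c})"
      by (rule notIn_Un_bij_betw3[where b=c and A="D-{c}" and f="T(c:=card D)" and A'="{1..card D - 1}", OF n1 n2, THEN iffD1, OF b2])
    moreover have "D - {c} \<union> {c} = D" using cD by auto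
    moreover have "{1..card D - 1} \<union> {(T(c := card D)) c} = {1..card D}" using cardD2 by (cases "card D") auto
    ultimately show ?thesis by simp
  qed
  moreover have "T d < card D" if "d \<in> D - {c}" for d
  proof -
    have "T d \<in> {1..card D - 1}" using bij that by (meson bij_betwE)
    then show ?thesis using cardD2 by auto
  qed
  note r = syt_row[OF assms(1)] and d = syt_col[OF assms(1)] and z = syt_out[OF assms(1)]
  have cr: "(fst c, Suc (snd c)) \<notin> D" "(Suc (fst c), snd c) \<notin> D" using assms(2) unfolding corner_def by auto
  moreover have "(T(c := card D)) (i, j) < (T(c := card D)) (i, Suc j)" if "(i, j) \<in> D" "(i, Suc j) \<in> D" for i j
  proof (cases "(i, j) = c")
    case True then show ?thesis using cr that by auto
  next
    case False
    show ?thesis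
    proof (cases "(i, Suc j) = c")
      case True
      then show ?thesis using False that \<open>\<And>d. d \<in> D - {c} \<Longrightarrow> T d < card D\<close> by auto
    next
      case False2: False
      then show ?thesis using False that r by auto
    qed
  qed
  moreover
  have "(T(c := card D)) (i, j) < (T(c := card D)) (Suc i, j)" if "(i, j) \<in> D" "(Suc i, j) \<in> D" for i j
  proof (cases "(i, j) = c")
    case True then show ?thesis using cr that by auto
  next
    case False
    show ?thesis
    proof (cases "(Suc i, j) = c")
      case True
      then show ?thesis using False that \<open>\<And>d. d \<in> D - {c} \<Longrightarrow> T d < card D\<close> by auto
    next
      case False2: False
      then show ?thesis using False that d by auto
    qed
  qed
  moreover have "(T(c := card D)) x = 0" if "x \<notin> D" for x using z cD that by auto
  ultimately show ?thesis by (intro sytI) auto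
qed

lemma FF_rec:
  assumes "ldown D" "D \<noteq> {}"
  shows "FF D = (\<Sum>c\<in>rem D. FF (D - {c}))"
proof -
  have fin: "finite D" using ldown_fin[OF assms(1)] .
  have frem: "finite (rem D)" using card_add_rem[OF assms(1)] by simp
  have "{T. syt D T} = (\<Union>c\<in>rem D. {T. syt D T \<and> T c = card D})"
  proof (intro equalityI subsetI)
    fix T assume "T \<in> {T. syt D T}"
    then have s: "syt D T" by simp
    have "card D \<in> {1..card D}" using fin assms(2) by (simp add: Suc_leI card_gt_0_iff)
    then obtain c where "c \<in> D" "T c = card D" using syt_bij[OF s] by (metis bij_betw_imp_surj_on imageE)
    then show "T \<in> (\<Union>c\<in>rem D. {T. syt D T \<and> T c = card D})"
    proof -
      have "corner D c" using syt_max_corner[OF s] \<open>c \<in> D\<close> \<open>T c = card D\<close> by blast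
      then show ?thesis using s \<open>T c = card D\<close> unfolding rem_def by blast
    qed
  qed auto
  then have "FF D = card (\<Union>c\<in>rem D. {T. syt D T \<and> T c = card D})" unfolding FF_def by simp
  also have "\<dots> = (\<Sum>c\<in>rem D. card {T. syt D T \<and> T c = card D})"
  proof (rule card_UN_disjoint[OF frem])
    show "\<forall>i\<in>rem D. finite {T. syt D T \<and> T i = card D}" using finite_syt[OF fin] by auto
    show "\<forall>i\<in>rem D. \<forall>j\<in>rem D. i \<noteq> j \<longrightarrow>
      {T. syt D T \<and> T i = card D} \<inter> {T. syt D T \<and> T j = card D} = {}"
    proof (intro ballI impI)
      fix x y assume "x \<in> rem D" "y \<in> rem D" "x \<noteq> y"
      then have "x \<in> D" "y \<in> D" unfolding rem_def corner_def by auto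
      show "{T. syt D T \<and> T x = card D} \<inter> {T. syt D T \<and> T y = card D} = {}"
      proof (rule ccontr)
        assume "\<not> ?thesis"
        then obtain T where "syt D T" "T x = card D" "T y = card D" by blast
        then show False using syt_bij[of D T] \<open>x \<in> D\<close> \<open>y \<in> D\<close> \<open>x \<noteq> y\<close>
          unfolding bij_betw_def inj_on_def by metis
      qed
    qed
  qed
  also have "\<dots> = (\<Sum>c\<in>rem D. FF (D - {c}))"
  proof (rule sum.cong[OF refl])
    fix c assume "c \<in> rem D"
    then have cc: "corner D c" unfolding rem_def by simp
    have "bij_betw (\<lambda>T. T(c := 0)) {T. syt D T \<and> T c = card D} {T. syt (D - {c}) T}"
    proof (rule bij_betw_byWitness[where f' = "\<lambda>T. T(c := card D)"])
      show "\<forall>T\<in>{T. syt D T \<and> T c = card D}. (T(c := 0))(c := card D) = T" by auto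
      show "\<forall>T\<in>{T. syt (D - {c}) T}. (T(c := card D))(c := 0) = T"
        using syt_out[of "D - {c}" _ c] by auto
      show "(\<lambda>T. T(c := 0)) ` {T. syt D T \<and> T c = card D} \<subseteq> {T. syt (D - {c}) T}"
        using syt_remove[OF _ cc] by blast
      show "(\<lambda>T. T(c := card D)) ` {T. syt (D - {c}) T} \<subseteq> {T. syt D T \<and> T c = card D}"
        using syt_extend[OF _ cc fin] by auto
    qed
    then show "card {T. syt D T \<and> T c = card D} = FF (D - {c})"
      unfolding FF_def by (rule bij_betw_same_card)
  qed
  finally show ?thesis .
qed

lemma exists_corner:
  assumes "finite D" "D \<noteq> {}"
  shows "\<exists>c. corner D c"
proof -
  define M where "M = Max ((\<lambda>c. fst c + snd c) ` D)"
  have "M \<in> (\<lambda>c. fst c + snd c) ` D" using assms M_def by simp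
  then obtain c where c: "c \<in> D" "fst c + snd c = M" by auto
  have "fst d + snd d \<le> M" if "d \<in> D" for d using assms M_def that by simp
  then have "(fst c, Suc (snd c)) \<notin> D" "(Suc (fst c), snd c) \<notin> D" using c by force+
  then show ?thesis using c unfolding corner_def by blast
qed

lemma FF_pos:
  assumes "ldown D"
  shows "FF D \<ge> 1"
  using assms
proof (induction "card D" arbitrary: D rule: less_induct)
  case less
  show ?case
  proof (cases "D = {}")
    case True then show ?thesis by (simp add: FF_empty)
  next
    case False
    have fin: "finite D" using ldown_fin[OF less.prems] .
    obtain c where c: "corner D c" using exists_corner[OF fin False] by blast
    then have cD: "c \<in> D" unfolding corner_def by simp
    have "FF (D - {c}) \<ge> 1"
    proof -
      have "card (D - {c}) < card D" using fin cD by (rule card_Diff1_less)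
      then show ?thesis using less.hyps[of "D - {c}"] ldown_remove[OF less.prems c] by blast
    qed
    also have "FF (D - {c}) \<le> (\<Sum>c\<in>rem D. FF (D - {c}))"
      using c card_add_rem[OF less.prems] by (intro member_le_sum) (auto simp: rem_def)
    finally show ?thesis using FF_rec[OF less.prems False] by simp
  qed
qed




definition rel :: "nat \<times> nat \<Rightarrow> nat \<times> nat \<Rightarrow> bool" where
  "rel c d \<longleftrightarrow> c \<noteq> (fst d, Suc (snd d)) \<and> c \<noteq> (Suc (fst d), snd d)"

lemma addable_not_succ:
  assumes "ldown D" "addable D c"
  shows "(fst c, Suc (snd c)) \<notin> D" "(Suc (fst c), snd c) \<notin> D"
proof -
  obtain a b where c: "c = (a, b)" by fastforce
  have cn: "(a, b) \<notin> D" using assms(2) c unfolding addable_def by simp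
  show "(fst c, Suc (snd c)) \<notin> D" using ldown_left[OF assms(1), of a b] cn c by auto
  show "(Suc (fst c), snd c) \<notin> D" using ldown_up[OF assms(1), of a b] cn c by auto
qed

lemma corner_insert_self:
  assumes "ldown D" "addable D c"
  shows "corner (insert c D) c"
  using addable_not_succ[OF assms] unfolding corner_def by (cases c) auto

lemma rem_insert:
  assumes "ldown D" "addable D c"
  shows "rem (insert c D) = insert c {d \<in> rem D. rel c d}"
proof (rule set_eqI)
  fix d
  have cn: "c \<notin> D" using assms(2) unfolding addable_def by simp
  show "d \<in> rem (insert c D) \<longleftrightarrow> d \<in> insert c {d \<in> rem D. rel c d}"
  proof (cases "d = c")
    case True
    then show ?thesis using corner_insert_self[OF assms] unfolding rem_def by simp
  next
    case False
    obtain x y where d: "d = (x, y)" by fastforce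
    have "corner (insert c D) d \<longleftrightarrow> corner D d \<and> rel c d"
      unfolding corner_def rel_def d using False d by auto
    then show ?thesis using False unfolding rem_def by simp
  qed
qed

lemma add_remove:
  assumes "ldown D" "corner D d"
  shows "add (D - {d}) = insert d {c \<in> add D. rel c d}"
proof (rule set_eqI)
  fix c
  obtain x y where d: "d = (x, y)" by fastforce
  have dD: "d \<in> D" using assms(2) unfolding corner_def by simp
  show "c \<in> add (D - {d}) \<longleftrightarrow> c \<in> insert d {c \<in> add D. rel c d}"
  proof (cases "c = d")
    case True
    have p1: "(i, j) \<in> D" if "d = (Suc i, j)" for i j using ldown_up[OF assms(1), of i j] dD that by simp
    have p2: "(i, j) \<in> D" if "d = (i, Suc j)" for i j using ldown_left[OF assms(1), of i j] dD that by simp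
    have "addable (D - {d}) d" unfolding addable_def using p1 p2 by auto
    then show ?thesis using True unfolding add_def by simp
  next
    case False
    obtain a b where c: "c = (a, b)" by fastforce
    have "addable (D - {d}) c \<longleftrightarrow> addable D c \<and> rel c d"
      unfolding addable_def rel_def c d using False c d by (cases a; cases b) auto
    then show ?thesis using False unfolding add_def by simp
  qed
qed

lemma up_identity:
  assumes "ldown D"
  shows "(\<Sum>c\<in>add D. FF (insert c D)) = (card D + 1) * FF D"
  using assms
proof (induction "card D" arbitrary: D rule: less_induct)
  case less
  note ld = less.prems
  have fin: "finite D" using ldown_fin[OF ld] .
  have fA: "finite (add D)" and fR: "finite (rem D)" and cAR: "card (add D) = card (rem D) + 1"
    using card_add_rem[OF ld] by auto
  define G where "G c d = FF (insert c (D - {d}))" for c d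
  define X where "X = (\<Sum>c\<in>add D. \<Sum>d\<in>rem D. if rel c d then G c d else 0)"
  have L: "(\<Sum>c\<in>add D. FF (insert c D)) = card (add D) * FF D + X"
  proof -
    have "FF (insert c D) = FF D + (\<Sum>d\<in>rem D. if rel c d then G c d else 0)" if c: "c \<in> add D" for c
    proof -
      have ac: "addable D c" using c unfolding add_def by simp
      have cn: "c \<notin> D" using ac unfolding addable_def by simp
      have ld2: "ldown (insert c D)" using ldown_insert[OF ld ac] .
      have "FF (insert c D) = (\<Sum>d\<in>rem (insert c D). FF (insert c D - {d}))"
        using FF_rec[OF ld2] by simp
      also have "\<dots> = (\<Sum>d\<in>insert c {d \<in> rem D. rel c d}. FF (insert c D - {d}))"
        unfolding rem_insert[OF ld ac] ..
      also have "\<dots> = FF (insert c D - {c}) + (\<Sum>d\<in>{d \<in> rem D. rel c d}. FF (insert c D - {d}))"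
      proof (rule sum.insert)
        show "finite {d \<in> rem D. rel c d}" using fR by simp
        show "c \<notin> {d \<in> rem D. rel c d}" using cn unfolding rem_def corner_def by auto
      qed
      also have "insert c D - {c} = D" using cn by auto
      also have "(\<Sum>d\<in>{d \<in> rem D. rel c d}. FF (insert c D - {d})) = (\<Sum>d\<in>{d \<in> rem D. rel c d}. G c d)"
      proof (rule sum.cong[OF refl])
        fix d assume "d \<in> {d \<in> rem D. rel c d}"
        then have "d \<noteq> c" using cn unfolding rem_def corner_def by auto
        then have "insert c D - {d} = insert c (D - {d})" by auto
        then show "FF (insert c D - {d}) = G c d" unfolding G_def by simp
      qed
      also have "\<dots> = (\<Sum>d\<in>rem D. if rel c d then G c d else 0)"
        using fR by (simp add: sum.inter_filter)
      finally show ?thesis .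
    qed
    then have "(\<Sum>c\<in>add D. FF (insert c D)) = (\<Sum>c\<in>add D. FF D + (\<Sum>d\<in>rem D. if rel c d then G c d else 0))"
      by (rule sum.cong[OF refl])
    also have "\<dots> = card (add D) * FF D + X" unfolding X_def by (simp add: sum.distrib)
    finally show ?thesis .
  qed
  have R: "card D * FF D = card (rem D) * FF D + X"
  proof -
    have "card D * FF D = (\<Sum>d\<in>rem D. card D * FF (D - {d}))"
    proof (cases "D = {}")
      case True then show ?thesis by simp
    next
      case False
      show ?thesis using FF_rec[OF ld False] by (simp add: sum_distrib_left)
    qed
    also have "\<dots> = (\<Sum>d\<in>rem D. FF D + (\<Sum>c\<in>add D. if rel c d then G c d else 0))"
    proof (rule sum.cong[OF refl])
      fix d assume "d \<in> rem D"
      then have cd: "corner D d" unfolding rem_def by simp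
      have dD: "d \<in> D" using cd unfolding corner_def by simp
      have ld3: "ldown (D - {d})" using ldown_remove[OF ld cd] .
      have lt: "card (D - {d}) < card D" using fin dD by (rule card_Diff1_less)
      have cm: "card (D - {d}) + 1 = card D" using fin dD
        by (metis One_nat_def Suc_pred card_Diff_singleton card_gt_0_iff empty_iff add.commute plus_1_eq_Suc)
      have IH: "(\<Sum>c\<in>add (D - {d}). FF (insert c (D - {d}))) = (card (D - {d}) + 1) * FF (D - {d})"
        using less.hyps[OF lt ld3] .
      have "card D * FF (D - {d}) = (\<Sum>c\<in>add (D - {d}). FF (insert c (D - {d})))"
        unfolding cm[symmetric] using IH by (rule sym)
      also have "\<dots> = (\<Sum>c\<in>insert d {c \<in> add D. rel c d}. FF (insert c (D - {d})))"
        unfolding add_remove[OF ld cd] ..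
      also have "\<dots> = FF (insert d (D - {d})) + (\<Sum>c\<in>{c \<in> add D. rel c d}. FF (insert c (D - {d})))"
      proof (rule sum.insert)
        show "finite {c \<in> add D. rel c d}" using fA by simp
        show "d \<notin> {c \<in> add D. rel c d}" using dD unfolding add_def addable_def by auto
      qed
      also have "insert d (D - {d}) = D" using dD by auto
      also have "(\<Sum>c\<in>{c \<in> add D. rel c d}. FF (insert c (D - {d}))) = (\<Sum>c\<in>add D. if rel c d then G c d else 0)"
        using fA unfolding G_def by (simp add: sum.inter_filter)
      finally show "card D * FF (D - {d}) = FF D + (\<Sum>c\<in>add D. if rel c d then G c d else 0)" .
    qed
    also have "\<dots> = card (rem D) * FF D + (\<Sum>d\<in>rem D. \<Sum>c\<in>add D. if rel c d then G c d else 0)"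
      by (simp add: sum.distrib)
    also have "(\<Sum>d\<in>rem D. \<Sum>c\<in>add D. if rel c d then G c d else 0) = X"
      unfolding X_def by (rule sum.swap)
    finally show ?thesis .
  qed
  show ?case using L R cAR by (simp add: algebra_simps)
qed




definition Parts :: "nat \<Rightarrow> (nat \<times> nat) set set" where
  "Parts k = {D. ldown D \<and> card D = k}"

lemma ldown_bound:
  assumes "ldown D" "(i, j) \<in> D"
  shows "i < card D \<and> j < card D"
proof -
  have fin: "finite D" using ldown_fin[OF assms(1)] .
  have s1: "(\<lambda>i'. (i', 0)) ` {..i} \<subseteq> D"
  proof
    fix x assume "x \<in> (\<lambda>i'. (i', 0::nat)) ` {..i}"
    then obtain i' where "i' \<le> i" "x = (i', 0)" by auto
    then show "x \<in> D" using ldown_closed[OF assms(1) assms(2), of i' 0] by simp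
  qed
  have s2: "(\<lambda>j'. (i, j')) ` {..j} \<subseteq> D"
  proof
    fix x assume "x \<in> (\<lambda>j'. (i, j')) ` {..j}"
    then obtain j' where "j' \<le> j" "x = (i, j')" by auto
    then show "x \<in> D" using ldown_closed[OF assms(1) assms(2), of i j'] by simp
  qed
  have "card ((\<lambda>i'. (i', 0::nat)) ` {..i}) = Suc i" by (simp add: card_image inj_on_def)
  moreover have "card ((\<lambda>j'. (i, j')) ` {..j}) = Suc j" by (simp add: card_image inj_on_def)
  ultimately show ?thesis using card_mono[OF fin s1] card_mono[OF fin s2] by simp
qed

lemma finite_Parts: "finite (Parts k)"
proof -
  have "Parts k \<subseteq> Pow ({..<k} \<times> {..<k})"
  proof
    fix D assume "D \<in> Parts k"
    then have ld: "ldown D" and ck: "card D = k" unfolding Parts_def by auto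
    show "D \<in> Pow ({..<k} \<times> {..<k})"
    proof (rule PowI, rule subsetI)
      fix x assume "x \<in> D"
      then obtain i j where x: "x = (i, j)" "(i, j) \<in> D" by (cases x) auto
      then show "x \<in> {..<k} \<times> {..<k}" using ldown_bound[OF ld x(2)] ck by simp
    qed
  qed
  then show ?thesis by (rule finite_subset) simp
qed

lemma Parts_0: "Parts 0 = {{}}"
proof -
  have "ldown {}" by (rule ldownI) auto
  moreover have "D = {}" if "ldown D" "card D = 0" for D using that ldown_fin[OF that(1)] by simp
  ultimately show ?thesis unfolding Parts_def by auto
qed

lemma sumsq: "(\<Sum>D\<in>Parts k. FF D * FF D) = fact k"
proof (induction k)
  case 0
  show ?case unfolding Parts_0 by (simp add: FF_empty)
next
  case (Suc k)
  have "(\<Sum>D\<in>Parts (Suc k). FF D * FF D) = (\<Sum>D\<in>Parts (Suc k). \<Sum>d\<in>rem D. FF D * FF (D - {d}))"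
  proof (rule sum.cong[OF refl])
    fix D assume "D \<in> Parts (Suc k)"
    then have ld: "ldown D" and ck: "card D = Suc k" unfolding Parts_def by auto
    have ne: "D \<noteq> {}" using ck by auto
    show "FF D * FF D = (\<Sum>d\<in>rem D. FF D * FF (D - {d}))"
      using FF_rec[OF ld ne] by (simp add: sum_distrib_left)
  qed
  also have "\<dots> = (\<Sum>p\<in>Sigma (Parts (Suc k)) rem. FF (fst p) * FF (fst p - {snd p}))"
  proof -
    have "\<forall>D\<in>Parts (Suc k). finite (rem D)" using card_add_rem unfolding Parts_def by auto
    then show ?thesis using finite_Parts by (simp add: sum.Sigma split_def)
  qed
  also have "\<dots> = (\<Sum>q\<in>Sigma (Parts k) add. FF (insert (snd q) (fst q)) * FF (fst q))"
  proof (rule sum.reindex_bij_witness[where j = "\<lambda>p. (fst p - {snd p}, snd p)" and i = "\<lambda>q. (insert (snd q) (fst q), snd q)"])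
    fix q assume q: "q \<in> Sigma (Parts k) add"
    obtain D c where qq: "q = (D, c)" by (rule prod.exhaust)
    have ld: "ldown D" and ck: "card D = k" and ac: "addable D c"
      using q qq unfolding Parts_def add_def by auto
    have cn: "c \<notin> D" using ac unfolding addable_def by simp
    show "(fst (insert (snd q) (fst q), snd q) - {snd (insert (snd q) (fst q), snd q)},
           snd (insert (snd q) (fst q), snd q)) = q" using qq cn by auto
    have "ldown (insert c D)" using ldown_insert[OF ld ac] .
    moreover have "card (insert c D) = Suc k" using ck cn ldown_fin[OF ld] by simp
    moreover have "c \<in> rem (insert c D)" using corner_insert_self[OF ld ac] unfolding rem_def by simp
    ultimately show "(insert (snd q) (fst q), snd q) \<in> Sigma (Parts (Suc k)) rem"
      using qq unfolding Parts_def by simp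
  next
    fix p assume p: "p \<in> Sigma (Parts (Suc k)) rem"
    obtain D d where pp: "p = (D, d)" by (rule prod.exhaust)
    have ld: "ldown D" and ck: "card D = Suc k" and cd: "corner D d"
      using p pp unfolding Parts_def rem_def by auto
    have dD: "d \<in> D" using cd unfolding corner_def by simp
    show "(insert (snd (fst p - {snd p}, snd p)) (fst (fst p - {snd p}, snd p)),
           snd (fst p - {snd p}, snd p)) = p" using pp dD by auto
    have "ldown (D - {d})" using ldown_remove[OF ld cd] .
    moreover have "card (D - {d}) = k" using ck dD ldown_fin[OF ld] by simp
    moreover have "d \<in> add (D - {d})" using add_remove[OF ld cd] by simp
    ultimately show "(fst p - {snd p}, snd p) \<in> Sigma (Parts k) add"
      using pp unfolding Parts_def by simp
    show "FF (insert (snd (fst p - {snd p}, snd p)) (fst (fst p - {snd p}, snd p))) * FF (fst (fst p - {snd p}, snd p)) =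
          FF (fst p) * FF (fst p - {snd p})" using pp dD by (simp add: insert_absorb)
  qed
  also have "\<dots> = (\<Sum>D\<in>Parts k. \<Sum>c\<in>add D. FF (insert c D) * FF D)"
  proof -
    have "\<forall>D\<in>Parts k. finite (add D)" using card_add_rem unfolding Parts_def by auto
    then show ?thesis using finite_Parts by (simp add: sum.Sigma split_def)
  qed
  also have "\<dots> = (\<Sum>D\<in>Parts k. (Suc k) * (FF D * FF D))"
  proof (rule sum.cong[OF refl])
    fix D assume "D \<in> Parts k"
    then have ld: "ldown D" and ck: "card D = k" unfolding Parts_def by auto
    have "(\<Sum>c\<in>add D. FF (insert c D) * FF D) = (\<Sum>c\<in>add D. FF (insert c D)) * FF D"
      by (simp add: sum_distrib_right)
    also have "\<dots> = (Suc k) * (FF D * FF D)" using up_identity[OF ld] ck by (simp add: algebra_simps)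
    finally show "(\<Sum>c\<in>add D. FF (insert c D) * FF D) = (Suc k) * (FF D * FF D)" .
  qed
  also have "\<dots> = Suc k * (\<Sum>D\<in>Parts k. FF D * FF D)" by (rule sum_distrib_left[symmetric])
  also have "\<dots> = Suc k * fact k" using Suc.IH by (simp only:)
  finally show ?case by simp
qed

lemma FF_sq_le:
  assumes "ldown D"
  shows "FF D * FF D \<le> fact (card D)"
proof -
  have "D \<in> Parts (card D)" using assms unfolding Parts_def by simp
  then have "FF D * FF D \<le> (\<Sum>D\<in>Parts (card D). FF D * FF D)"
    by (intro member_le_sum) (auto simp: finite_Parts)
  then show ?thesis using sumsq by simp
qed




definition mu :: "(nat \<times> nat) set \<Rightarrow> (nat \<times> nat) set" where
  "mu D = {p. (Suc (fst p), snd p) \<in> D}"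

definition sh :: "nat \<times> nat \<Rightarrow> nat \<times> nat" where
  "sh p = (Suc (fst p), snd p)"

lemma inj_sh: "inj sh" unfolding sh_def inj_def by auto

lemma mu_vimage: "mu D = sh -` D" unfolding mu_def sh_def by auto

lemma ldown_mu:
  assumes "ldown D"
  shows "ldown (mu D)"
proof (rule ldownI)
  show "finite (mu D)" unfolding mu_vimage using ldown_fin[OF assms] inj_sh
    by (simp add: finite_vimageI)
  fix i j
  show "(Suc i, j) \<in> mu D \<Longrightarrow> (i, j) \<in> mu D" using ldown_up[OF assms, of "Suc i" j] unfolding mu_def by simp
  show "(i, Suc j) \<in> mu D \<Longrightarrow> (i, j) \<in> mu D" using ldown_left[OF assms, of "Suc i" j] unfolding mu_def by simp
qed

lemma card_split:
  assumes "ldown D"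
  shows "card D = LL D 0 + card (mu D)"
proof -
  have fin: "finite D" using ldown_fin[OF assms] .
  have "D = {c \<in> D. fst c = 0} \<union> {c \<in> D. fst c \<noteq> 0}" by auto
  then have "card D = card {c \<in> D. fst c = 0} + card {c \<in> D. fst c \<noteq> 0}"
    using fin by (metis (no_types, lifting) card_Un_disjoint disjoint_iff finite_Un mem_Collect_eq)
  moreover have "{c \<in> D. fst c = 0} = (\<lambda>j. (0, j)) ` {j. (0, j) \<in> D}" by force
  then have "card {c \<in> D. fst c = 0} = LL D 0" unfolding LL_def by (simp add: card_image inj_on_def)
  moreover have "{c \<in> D. fst c \<noteq> 0} = sh ` mu D"
  proof (rule set_eqI)
    fix c :: "nat \<times> nat"
    obtain a b where c: "c = (a, b)" by (rule prod.exhaust)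
    show "c \<in> {c \<in> D. fst c \<noteq> 0} \<longleftrightarrow> c \<in> sh ` mu D"
      unfolding c mu_def sh_def by (cases a) (auto simp: image_iff)
  qed
  then have "card {c \<in> D. fst c \<noteq> 0} = card (mu D)"
    using card_image[OF inj_on_subset[OF inj_sh subset_UNIV]] by simp
  ultimately show ?thesis by simp
qed

lemma corner_sh: "corner D (sh c) \<longleftrightarrow> corner (mu D) c"
  unfolding corner_def mu_def sh_def by simp

lemma mu_remove_sh: "mu (D - {sh c}) = mu D - {c}"
  unfolding mu_def sh_def by (cases c) auto

lemma mu_remove0: "fst c = 0 \<Longrightarrow> mu (D - {c}) = mu D"
  unfolding mu_def by (cases c) auto

lemma upper_rec:
  assumes "ldown D"
  shows "FF D \<le> (card D choose card (mu D)) * FF (mu D)"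
  using assms
proof (induction "card D" arbitrary: D rule: less_induct)
  case less
  note ld = less.prems
  have fin: "finite D" using ldown_fin[OF ld] .
  show ?case
  proof (cases "D = {}")
    case True
    then have "mu D = {}" unfolding mu_def by simp
    then show ?thesis using True by (simp add: FF_empty)
  next
    case False
    define n where "n = card D"
    define k where "k = card (mu D)"
    have n1: "n \<ge> 1" using False fin n_def by (simp add: Suc_leI card_gt_0_iff)
    have ldm: "ldown (mu D)" using ldown_mu[OF ld] .
    have fR: "finite (rem D)" using card_add_rem[OF ld] by simp
    define X0 where "X0 = {c \<in> rem D. fst c = 0}"
    define X1 where "X1 = {c \<in> rem D. fst c \<noteq> 0}"
    have split: "FF D = (\<Sum>c\<in>X0. FF (D - {c})) + (\<Sum>c\<in>X1. FF (D - {c}))"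
    proof -
      have "rem D = X0 \<union> X1" "X0 \<inter> X1 = {}" unfolding X0_def X1_def by auto
      moreover have "finite X0" "finite X1" using fR unfolding X0_def X1_def by auto
      ultimately show ?thesis using FF_rec[OF ld False] by (simp add: sum.union_disjoint)
    qed
    have cdm: "card (D - {c}) = n - 1" if "c \<in> D" for c using that fin n_def by simp
    have ltc: "card (D - {c}) < card D" if "c \<in> D" for c using fin that by (rule card_Diff1_less)
    have b0: "(\<Sum>c\<in>X0. FF (D - {c})) \<le> ((n - 1) choose k) * FF (mu D)"
    proof -
      have each: "FF (D - {c}) \<le> ((n - 1) choose k) * FF (mu D)" if "c \<in> X0" for c
      proof -
        have cc: "corner D c" and c0: "fst c = 0" using that unfolding X0_def rem_def by auto
        have cD: "c \<in> D" using cc unfolding corner_def by simp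
        have "FF (D - {c}) \<le> (card (D - {c}) choose card (mu (D - {c}))) * FF (mu (D - {c}))"
          using less.hyps[OF ltc[OF cD] ldown_remove[OF ld cc]] .
        then show ?thesis using cdm[OF cD] mu_remove0[OF c0] k_def by simp
      qed
      have fX0: "finite X0" using fR unfolding X0_def by simp
      have "card X0 \<le> 1"
      proof -
        have "a = b" if "a \<in> X0" "b \<in> X0" for a b
        proof -
          have aX: "corner D a" "fst a = 0" using that(1) unfolding X0_def rem_def by auto
          define a2 where "a2 = snd a"
          have a: "a = (0, a2)" "corner D a" using aX unfolding a2_def by (cases a, simp)+
          have bX: "corner D b" "fst b = 0" using that(2) unfolding X0_def rem_def by auto
          define b2 where "b2 = snd b"
          have b: "b = (0, b2)" "corner D b" using bX unfolding b2_def by (cases b, simp)+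
          have "\<not> a2 < b2"
          proof
            assume "a2 < b2"
            then have "(0, Suc a2) \<in> D" using ldown_closed[OF ld, of 0 b2 0 "Suc a2"] b unfolding corner_def by simp
            then show False using a unfolding corner_def by simp
          qed
          moreover have "\<not> b2 < a2"
          proof
            assume "b2 < a2"
            then have "(0, Suc b2) \<in> D" using ldown_closed[OF ld, of 0 a2 0 "Suc b2"] a unfolding corner_def by simp
            then show False using b unfolding corner_def by simp
          qed
          ultimately show ?thesis using a b by simp
        qed
        then show ?thesis using card_le_Suc0_iff_eq[OF fX0] by simp
      qed
      have "(\<Sum>c\<in>X0. FF (D - {c})) \<le> card X0 * (((n - 1) choose k) * FF (mu D))"
        using sum_bounded_above[of X0 "\<lambda>c. FF (D - {c})", OF each] by simp
      also have "\<dots> \<le> 1 * (((n - 1) choose k) * FF (mu D))"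
        using \<open>card X0 \<le> 1\<close> by (intro mult_right_mono) auto
      finally show ?thesis by simp
    qed
    have X1eq: "X1 = sh ` rem (mu D)"
    proof (rule set_eqI)
      fix c :: "nat \<times> nat"
      obtain a b where c: "c = (a, b)" by (rule prod.exhaust)
      show "c \<in> X1 \<longleftrightarrow> c \<in> sh ` rem (mu D)"
      proof (cases a)
        case 0 then show ?thesis unfolding X1_def c sh_def by auto
      next
        case (Suc a')
        have "c = sh (a', b)" unfolding c Suc sh_def by simp
        moreover have "c \<in> sh ` rem (mu D) \<longleftrightarrow> (a', b) \<in> rem (mu D)"
          unfolding \<open>c = sh (a', b)\<close> using inj_sh by (simp add: inj_image_mem_iff)
        ultimately show ?thesis unfolding X1_def rem_def using corner_sh[of D "(a', b)"] Suc c by (simp add: sh_def)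
      qed
    qed
    have b1: "(\<Sum>c\<in>X1. FF (D - {c})) \<le> ((n - 1) choose (k - 1)) * (\<Sum>c'\<in>rem (mu D). FF (mu D - {c'}))"
    proof -
      have "(\<Sum>c\<in>X1. FF (D - {c})) = (\<Sum>c'\<in>rem (mu D). FF (D - {sh c'}))"
        unfolding X1eq using sum.reindex[OF inj_on_subset[OF inj_sh subset_UNIV], of "\<lambda>c. FF (D - {c})" "rem (mu D)"]
        by (simp add: comp_def)
      also have "\<dots> \<le> (\<Sum>c'\<in>rem (mu D). ((n - 1) choose (k - 1)) * FF (mu D - {c'}))"
      proof (rule sum_mono)
        fix c' assume "c' \<in> rem (mu D)"
        then have cc': "corner (mu D) c'" unfolding rem_def by simp
        then have cc: "corner D (sh c')" using corner_sh by simp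
        have cD: "sh c' \<in> D" using cc unfolding corner_def by simp
        have c'm: "c' \<in> mu D" using cc' unfolding corner_def by simp
        have "FF (D - {sh c'}) \<le> (card (D - {sh c'}) choose card (mu (D - {sh c'}))) * FF (mu (D - {sh c'}))"
          using less.hyps[OF ltc[OF cD] ldown_remove[OF ld cc]] .
        moreover have "card (mu D - {c'}) = k - 1" using c'm ldown_fin[OF ldm] k_def by simp
        ultimately show "FF (D - {sh c'}) \<le> ((n - 1) choose (k - 1)) * FF (mu D - {c'})"
          using cdm[OF cD] mu_remove_sh by simp
      qed
      also have "\<dots> = ((n - 1) choose (k - 1)) * (\<Sum>c'\<in>rem (mu D). FF (mu D - {c'}))"
        by (simp add: sum_distrib_left)
      finally show ?thesis .
    qed
    show ?thesis
    proof (cases "mu D = {}")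
      case True
      then have "rem (mu D) = {}" unfolding rem_def corner_def by simp
      then have "FF D \<le> ((n - 1) choose k) * FF (mu D)" using split b0 b1 by simp
      then show ?thesis using True n_def k_def by (simp add: FF_empty)
    next
      case mne: False
      have "FF D \<le> ((n - 1) choose k) * FF (mu D) + ((n - 1) choose (k - 1)) * FF (mu D)"
        using split b0 b1 FF_rec[OF ldm mne] by simp
      also have "\<dots> = (((n - 1) choose k) + ((n - 1) choose (k - 1))) * FF (mu D)"
        by (simp add: algebra_simps)
      also have "((n - 1) choose k) + ((n - 1) choose (k - 1)) = n choose k"
      proof -
        have k1: "k \<ge> 1" using mne ldown_fin[OF ldm] k_def by (simp add: Suc_leI card_gt_0_iff)
        obtain n' where n': "n = Suc n'" using n1 by (cases n) auto
        obtain k' where k': "k = Suc k'" using k1 by (cases k) auto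
        show ?thesis unfolding n' k' by simp
      qed
      finally show ?thesis using n_def k_def by simp
    qed
  qed
qed




lemma lower_rec:
  assumes "ldown D"
  shows "(LL D 0 choose card (mu D)) \<le> FF D"
  using assms
proof (induction "card D" arbitrary: D rule: less_induct)
  case less
  note ld = less.prems
  have fin: "finite D" using ldown_fin[OF ld] .
  define m where "m = LL D 0"
  define k where "k = card (mu D)"
  have ldm: "ldown (mu D)" using ldown_mu[OF ld] .
  have pos: "FF D \<ge> 1" using FF_pos[OF ld] .
  show ?case
  proof (cases "k = 0")
    case True
    then show ?thesis using pos k_def by simp
  next
    case False
    have mne: "mu D \<noteq> {}" using False k_def by auto
    obtain c' where cc': "corner (mu D) c'" using exists_corner[OF ldown_fin[OF ldm] mne] by blast
    have cc1: "corner D (sh c')" using cc' corner_sh by simp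
    have c1D: "sh c' \<in> D" using cc1 unfolding corner_def by simp
    have "(0, 0) \<in> D" using ldown_closed[OF ld c1D[unfolded sh_def]] by simp
    then have m1: "m \<ge> 1" using mem_iff_LL[OF ld] m_def by simp
    show ?thesis
    proof (cases "(1, m - 1) \<in> D")
      case True
      have "(\<lambda>j. (0, j)) ` {..<m} \<subseteq> mu D"
      proof
        fix x assume "x \<in> (\<lambda>j. (0::nat, j)) ` {..<m}"
        then obtain j where "j < m" "x = (0, j)" by auto
        then show "x \<in> mu D" using ldown_closed[OF ld True, of 1 j] unfolding mu_def by simp
      qed
      then have "card ((\<lambda>j. (0::nat, j)) ` {..<m}) \<le> k" using card_mono[OF ldown_fin[OF ldm]] k_def by blast
      then have "m \<le> k" by (simp add: card_image inj_on_def)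
      then have "(m choose k) \<le> 1"
        by (cases "m = k") (auto simp: binomial_eq_0)
      then show ?thesis using pos m_def k_def by simp
    next
      case False
      define c0 where "c0 = (0::nat, m - 1)"
      have c0D: "c0 \<in> D" unfolding c0_def using mem_iff_LL[OF ld] m_def m1 by simp
      have "(0, m) \<notin> D" using mem_iff_LL[OF ld] m_def by simp
      then have cc0: "corner D c0" using c0D False m1 unfolding corner_def c0_def by simp
      have ne: "c0 \<noteq> sh c'" unfolding c0_def sh_def by (cases c') simp
      have fR: "finite (rem D)" using card_add_rem[OF ld] by simp
      have Dne: "D \<noteq> {}" using c0D by auto
      have "FF (D - {c0}) + FF (D - {sh c'}) = (\<Sum>c\<in>{c0, sh c'}. FF (D - {c}))" using ne by simp
      also have "\<dots> \<le> (\<Sum>c\<in>rem D. FF (D - {c}))"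
        by (rule sum_mono2[OF fR]) (use cc0 cc1 in \<open>auto simp: rem_def\<close>)
      also have "\<dots> = FF D" using FF_rec[OF ld Dne] by simp
      finally have sum2: "FF (D - {c0}) + FF (D - {sh c'}) \<le> FF D" .
      have i0: "(LL (D - {c0}) 0 choose card (mu (D - {c0}))) \<le> FF (D - {c0})"
        using less.hyps[OF card_Diff1_less[OF fin c0D] ldown_remove[OF ld cc0]] .
      have "{j. (0, j) \<in> D - {c0}} = {..<m} - {m - 1}"
        using row_eq[OF ld, of 0] m_def unfolding c0_def by auto
      then have "LL (D - {c0}) 0 = m - 1" unfolding LL_def using m1 by simp
      moreover have "mu (D - {c0}) = mu D" using mu_remove0[of c0 D] unfolding c0_def by simp
      ultimately have i0': "((m - 1) choose k) \<le> FF (D - {c0})" using i0 k_def by simp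
      have i1: "(LL (D - {sh c'}) 0 choose card (mu (D - {sh c'}))) \<le> FF (D - {sh c'})"
        using less.hyps[OF card_Diff1_less[OF fin c1D] ldown_remove[OF ld cc1]] .
      have "{j. (0, j) \<in> D - {sh c'}} = {j. (0, j) \<in> D}" unfolding sh_def by auto
      then have "LL (D - {sh c'}) 0 = m" unfolding LL_def m_def by simp
      moreover have "card (mu (D - {sh c'})) = k - 1"
        using mu_remove_sh[of D c'] cc' ldown_fin[OF ldm] k_def unfolding corner_def by simp
      ultimately have i1': "(m choose (k - 1)) \<le> FF (D - {sh c'})" using i1 by simp
      obtain m' where m': "m = Suc m'" using m1 by (cases m) auto
      obtain k' where k': "k = Suc k'" using \<open>k \<noteq> 0\<close> by (cases k) auto
      have "(m choose k) = (m' choose k') + (m' choose k)" unfolding m' k' by simp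
      also have "\<dots> \<le> (m choose (k - 1)) + ((m - 1) choose k)"
        using binomial_right_mono[of m' m k'] m' k' by simp
      also have "\<dots> \<le> FF D" using i0' i1' sum2 by simp
      finally show ?thesis using m_def k_def by simp
    qed
  qed
qed




lemma mem_swap: "(a, b) \<in> prod.swap ` D \<longleftrightarrow> (b, a) \<in> D"
proof
  assume "(a, b) \<in> prod.swap ` D" then show "(b, a) \<in> D" by auto
next
  assume "(b, a) \<in> D"
  moreover have "(a, b) = prod.swap (b, a)" by simp
  ultimately show "(a, b) \<in> prod.swap ` D" by (rule image_eqI[rotated])
qed

lemma ldown_swap:
  assumes "ldown D"
  shows "ldown (prod.swap ` D)"
proof (rule ldownI)
  show "finite (prod.swap ` D)" using ldown_fin[OF assms] by simp
  fix i j
  show "(Suc i, j) \<in> prod.swap ` D \<Longrightarrow> (i, j) \<in> prod.swap ` D"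
    unfolding mem_swap using ldown_left[OF assms, of j i] .
  show "(i, Suc j) \<in> prod.swap ` D \<Longrightarrow> (i, j) \<in> prod.swap ` D"
    unfolding mem_swap using ldown_up[OF assms, of j i] .
qed

lemma card_swap: "card (prod.swap ` D) = card D"
  by (simp add: card_image)

lemma syt_swap:
  assumes "syt D T"
  shows "syt (prod.swap ` D) (T \<circ> prod.swap)"
proof (rule sytI)
  have b1: "bij_betw prod.swap (prod.swap ` D) D"
    by (rule bij_betw_imageI) (auto simp: inj_on_def image_image)
  show "bij_betw (T \<circ> prod.swap) (prod.swap ` D) {1..card (prod.swap ` D)}"
    unfolding card_swap using bij_betw_trans[OF b1 syt_bij[OF assms]] .
  fix i j
  show "(i, j) \<in> prod.swap ` D \<Longrightarrow> (i, Suc j) \<in> prod.swap ` D \<Longrightarrow> (T \<circ> prod.swap) (i, j) < (T \<circ> prod.swap) (i, Suc j)"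
    unfolding mem_swap using syt_col[OF assms] by simp
  show "(i, j) \<in> prod.swap ` D \<Longrightarrow> (Suc i, j) \<in> prod.swap ` D \<Longrightarrow> (T \<circ> prod.swap) (i, j) < (T \<circ> prod.swap) (Suc i, j)"
    unfolding mem_swap using syt_row[OF assms] by simp
next
  fix c assume "c \<notin> prod.swap ` D"
  then have "prod.swap c \<notin> D" by (cases c) (simp add: mem_swap)
  then show "(T \<circ> prod.swap) c = 0" using syt_out[OF assms] by simp
qed

lemma FF_swap: "FF (prod.swap ` D) = FF D"
proof -
  have "bij_betw (\<lambda>T. T \<circ> prod.swap) {T. syt D T} {T. syt (prod.swap ` D) T}"
  proof (rule bij_betw_byWitness[where f' = "\<lambda>T. T \<circ> prod.swap"])
    show "\<forall>a\<in>{T. syt D T}. a \<circ> prod.swap \<circ> prod.swap = a" by (auto simp: fun_eq_iff)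
    show "\<forall>a'\<in>{T. syt (prod.swap ` D) T}. a' \<circ> prod.swap \<circ> prod.swap = a'" by (auto simp: fun_eq_iff)
    show "(\<lambda>T. T \<circ> prod.swap) ` {T. syt D T} \<subseteq> {T. syt (prod.swap ` D) T}" using syt_swap by auto
    have "syt D (T \<circ> prod.swap)" if "syt (prod.swap ` D) T" for T
      using syt_swap[OF that] by (simp add: image_image)
    then show "(\<lambda>T. T \<circ> prod.swap) ` {T. syt (prod.swap ` D) T} \<subseteq> {T. syt D T}" by auto
  qed
  then show ?thesis unfolding FF_def by (rule bij_betw_same_card[symmetric])
qed

lemma young_eq: "young_diagram lam = Sigma {..<length lam} (\<lambda>i. {..<lam ! i})"
  unfolding young_diagram_def by auto

lemma ldown_young:
  assumes "is_partition lam n"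
  shows "ldown (young_diagram lam)"
proof (rule ldownI)
  show "finite (young_diagram lam)" unfolding young_eq by auto
  fix i j
  have s: "sorted (rev lam)" using assms unfolding is_partition_def by simp
  show "(Suc i, j) \<in> young_diagram lam \<Longrightarrow> (i, j) \<in> young_diagram lam"
    unfolding young_diagram_def using sorted_rev_nth_mono[OF s, of i "Suc i"] by auto
  show "(i, Suc j) \<in> young_diagram lam \<Longrightarrow> (i, j) \<in> young_diagram lam"
    unfolding young_diagram_def by auto
qed

lemma card_young:
  assumes "is_partition lam n"
  shows "card (young_diagram lam) = n"
proof -
  have "card (young_diagram lam) = (\<Sum>i<length lam. lam ! i)" unfolding young_eq by simp
  also have "\<dots> = sum_list lam" by (simp add: sum_list_sum_nth lessThan_atLeast0)
  finally show ?thesis using assms unfolding is_partition_def by simp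
qed

lemma num_young: "num_SYT lam = FF (young_diagram lam)"
proof -
  have "is_SYT lam T \<longleftrightarrow> syt (young_diagram lam) T" if "card (young_diagram lam) = sum_list lam" for T
    unfolding is_SYT_def syt_def that ..
  moreover have "card (young_diagram lam) = sum_list lam"
  proof -
    have "card (young_diagram lam) = (\<Sum>i<length lam. lam ! i)" unfolding young_eq by simp
    also have "\<dots> = sum_list lam" by (simp add: sum_list_sum_nth lessThan_atLeast0)
    finally show ?thesis .
  qed
  ultimately have "Collect (is_SYT lam) = Collect (syt (young_diagram lam))" by (intro Collect_cong) simp
  then show ?thesis unfolding num_SYT_def FF_def by simp
qed

lemma LL_young: "LL (young_diagram lam) 0 = first_part lam"
proof (cases lam)
  case Nil then show ?thesis unfolding LL_def young_diagram_def first_part_def by simp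
next
  case (Cons a l)
  have "{j. (0, j) \<in> young_diagram lam} = {..<a}" unfolding young_diagram_def Cons by auto
  then show ?thesis unfolding LL_def first_part_def Cons by simp
qed

lemma LL_young_swap:
  assumes "is_partition lam n"
  shows "LL (prod.swap ` young_diagram lam) 0 = length lam"
proof -
  have "{j. (0, j) \<in> prod.swap ` young_diagram lam} = {..<length lam}"
  proof -
    have "0 < lam ! j" if "j < length lam" for j using assms that nth_mem unfolding is_partition_def by blast
    then show ?thesis unfolding mem_swap young_diagram_def by auto
  qed
  then show ?thesis unfolding LL_def by simp
qed

theorem mainTheorem3:
  fixes lam :: "nat list" and n k :: nat
  assumes "is_partition lam n" and "aft lam = k"
  shows "real (num_SYT lam) \<le> real n ^ k / sqrt (real (fact k)) \<and>
         (n - k) choose k \<le> num_SYT lam"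
proof -
  define Y where "Y = young_diagram lam"
  have ldY: "ldown Y" using ldown_young[OF assms(1)] Y_def by simp
  have cY: "card Y = n" using card_young[OF assms(1)] Y_def by simp
  have sn: "sum_list lam = n" using assms(1) unfolding is_partition_def by simp
  have kdef: "k = n - max (first_part lam) (length lam)" using assms(2) sn unfolding aft_def by simp
  obtain E where ldE: "ldown E" and cE: "card E = n" and FE: "FF E = num_SYT lam"
    and LE: "LL E 0 = max (first_part lam) (length lam)"
  proof (cases "length lam \<le> first_part lam")
    case True
    show ?thesis
      by (rule that[of Y]) (use ldY cY True in \<open>auto simp: Y_def num_young LL_young\<close>)
  next
    case False
    show ?thesis
      by (rule that[of "prod.swap ` Y"])
        (use ldY cY False in \<open>auto simp: Y_def num_young LL_young_swap[OF assms(1)] ldown_swap card_swap FF_swap\<close>)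
  qed
  have cs: "card E = LL E 0 + card (mu E)" using card_split[OF ldE] .
  have km: "card (mu E) = k" using cs cE LE kdef by simp
  have nk: "n - k = LL E 0" using cs cE km by simp
  have low: "(n - k) choose k \<le> num_SYT lam" using lower_rec[OF ldE] nk km FE by simp
  have up1: "num_SYT lam \<le> (n choose k) * FF (mu E)" using upper_rec[OF ldE] cE km FE by simp
  have sq: "FF (mu E) * FF (mu E) \<le> fact k" using FF_sq_le[OF ldown_mu[OF ldE]] km by simp
  have fpos: "real (fact k) > 0" by simp
  define s where "s = sqrt (real (fact k))"
  have spos: "s > 0" unfolding s_def using fpos by simp
  have ss: "s * s = real (fact k)" unfolding s_def using fpos by simp
  have Fs: "real (FF (mu E)) \<le> s"
  proof -
    have "real (FF (mu E) * FF (mu E)) \<le> real (fact k)" using sq by (simp only: of_nat_le_iff)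
    then have "real (FF (mu E)) ^ 2 \<le> real (fact k)" by (simp add: power2_eq_square)
    then show ?thesis unfolding s_def by (simp add: real_le_rsqrt)
  qed
  have cf: "real (n choose k) * real (fact k) \<le> real n ^ k"
  proof -
    have "real ((n choose k) * fact k) \<le> real (n ^ k)" using binomial_fact_pow[of n k] by (simp only: of_nat_le_iff)
    then show ?thesis by simp
  qed
  have "real (num_SYT lam) \<le> real (n choose k) * real (FF (mu E))" using up1 by (simp flip: of_nat_mult)
  also have "\<dots> \<le> real (n choose k) * s" using Fs by (intro mult_left_mono) auto
  also have "\<dots> = real (n choose k) * (s * s) / s" using spos by simp
  also have "\<dots> \<le> real n ^ k / s" using cf ss spos by (intro divide_right_mono) auto
  finally show ?thesis using low unfolding s_def by simp
qed


end
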